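(* Let $G = H_1 \cup \dots \cup H_k$ be a finite simple graph whose connected components are $H_1,\dots,H_k$, where at most one $H_i$ is isomorphic to $K_1$ and no $H_i$ is isomorphic to $K_2$. Let $P$ be the collection of components $H_i$ with $\det'(H_i) > 0$, let $Q$ be the collection of components $H_i$ with $\det'(H_i) = 0$ (counted with multiplicity, i.e. $|Q|$ is the number of indices $i$ with $\det'(H_i)=0$), and let $R$ be the set of isomorphism classes of graphs occurring in $Q$. Then \[\det'(G) = |Q| - |R| + \sum_{H \in P} \det'(H).\]
   Context: All graphs are finite and simple. An automorphism of $G$ is a bijection $\phi: V(G)\to V(G)$ preserving adjacency and non-adjacency; $\mathrm{Aut}(G)$ is the automorphism group. An automorphism $\phi$ fixes an edge $\{u,v\}$ if $\{\phi(u),\phi(v)\}=\{u,v\}$. For a graph $G$ with at most one isolated vertex and no component isomorphic to $K_2$, an edge subset $T\subseteq E(G)$ is an edge determining set if the only $\phi\in\mathrm{Aut}(G)$ satisfying $\{\phi(u),\phi(v)\}=\{u,v\}$ for all $\{u,v\}\in T$ is the identity; the determining index $\det'(G)$ is the minimum size of an edge determining set (it is $0$ if $G$ has only the trivial automorphism). *)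

theory Defs
  imports Main
begin

definition simple_graph :: "'a set \<Rightarrow> 'a set set \<Rightarrow> bool" where
  "simple_graph V E \<longleftrightarrow> finite V \<and>
     (\<forall>e\<in>E. \<exists>u v. u \<noteq> v \<and> u \<in> V \<and> v \<in> V \<and> e = {u, v})"

definition is_aut :: "'a set \<Rightarrow> 'a set set \<Rightarrow> ('a \<Rightarrow> 'a) \<Rightarrow> bool" where
  "is_aut V E \<phi> \<longleftrightarrow> bij_betw \<phi> V V \<and> (\<forall>x. x \<notin> V \<longrightarrow> \<phi> x = x) \<and>
     (\<forall>u\<in>V. \<forall>v\<in>V. {u, v} \<in> E \<longleftrightarrow> {\<phi> u, \<phi> v} \<in> E)"

definition fixes_edge :: "('a \<Rightarrow> 'a) \<Rightarrow> 'a set \<Rightarrow> bool" where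
  "fixes_edge \<phi> e \<longleftrightarrow> \<phi> ` e = e"

definition edge_determining :: "'a set \<Rightarrow> 'a set set \<Rightarrow> 'a set set \<Rightarrow> bool" where
  "edge_determining V E T \<longleftrightarrow> T \<subseteq> E \<and>
     (\<forall>\<phi>. is_aut V E \<phi> \<and> (\<forall>e\<in>T. fixes_edge \<phi> e) \<longrightarrow> \<phi> = id)"

definition det_index :: "'a set \<Rightarrow> 'a set set \<Rightarrow> nat" where
  "det_index V E = (LEAST n. \<exists>T. edge_determining V E T \<and> card T = n)"

definition adj_rel :: "'a set set \<Rightarrow> ('a \<times> 'a) set" where
  "adj_rel E = {(u, v). {u, v} \<in> E}"

definition components :: "'a set \<Rightarrow> 'a set set \<Rightarrow> 'a set set" where
  "components V E = (\<lambda>v. {u. (v, u) \<in> (adj_rel E)\<^sup>*}) ` V"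

definition induced_edges :: "'a set set \<Rightarrow> 'a set \<Rightarrow> 'a set set" where
  "induced_edges E C = {e \<in> E. e \<subseteq> C}"

definition graph_iso :: "'a set \<Rightarrow> 'a set set \<Rightarrow> 'b set \<Rightarrow> 'b set set \<Rightarrow> bool" where
  "graph_iso V1 E1 V2 E2 \<longleftrightarrow> (\<exists>f. bij_betw f V1 V2 \<and>
     (\<forall>u\<in>V1. \<forall>v\<in>V1. {u, v} \<in> E1 \<longleftrightarrow> {f u, f v} \<in> E2))"

definition is_complete_graph :: "nat \<Rightarrow> 'a set \<Rightarrow> 'a set set \<Rightarrow> bool" where
  "is_complete_graph n V E \<longleftrightarrow> card V = n \<and> finite V \<and>
     E = {e. \<exists>u v. u \<noteq> v \<and> u \<in> V \<and> v \<in> V \<and> e = {u, v}}"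

end

theory Submission
  imports Defs
begin

locale sg =
  fixes V :: "'a set" and E :: "'a set set"
  assumes sg: "simple_graph V E"
begin

definition comp :: "'a \<Rightarrow> 'a set" where
  "comp v = {u. (v, u) \<in> (adj_rel E)\<^sup>*}"

abbreviation Ec where "Ec C \<equiv> induced_edges E C"

lemma finV: "finite V" using sg by (simp add: simple_graph_def)

lemma edgeE: "e \<in> E \<Longrightarrow> \<exists>u v. u \<noteq> v \<and> u \<in> V \<and> v \<in> V \<and> e = {u, v}"
  using sg by (simp add: simple_graph_def)

lemma edgeV: "{u, v} \<in> E \<Longrightarrow> u \<in> V \<and> v \<in> V \<and> u \<noteq> v"
proof -
  assume "{u,v} \<in> E"
  then obtain a b where "a \<noteq> b" "a \<in> V" "b \<in> V" "{u,v} = {a,b}" using edgeE by blast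
  then show ?thesis by (auto simp: doubleton_eq_iff)
qed

lemma finE: "finite E"
proof -
  have "E \<subseteq> Pow V" using edgeE by blast
  then show ?thesis using finV by (meson finite_Pow_iff finite_subset)
qed

lemma edge_ne: "e \<in> E \<Longrightarrow> e \<noteq> {}" using edgeE by blast

lemma adj_iff: "(u, v) \<in> adj_rel E \<longleftrightarrow> {u, v} \<in> E" by (simp add: adj_rel_def)

lemma sym_adj: "sym (adj_rel E)"
  by (auto simp: sym_def adj_rel_def insert_commute)

lemma rt_sym: "(u, v) \<in> (adj_rel E)\<^sup>* \<Longrightarrow> (v, u) \<in> (adj_rel E)\<^sup>*"
  using sym_rtrancl[OF sym_adj] by (meson symD)

lemma rt_V: "(u, v) \<in> (adj_rel E)\<^sup>* \<Longrightarrow> u \<in> V \<Longrightarrow> v \<in> V"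
proof (induction rule: rtrancl_induct)
  case base then show ?case .
next
  case (step y z) then show ?case using edgeV adj_iff by blast
qed

lemma comp_sub: "v \<in> V \<Longrightarrow> comp v \<subseteq> V"
  using rt_V by (auto simp: comp_def)

lemma comp_self: "v \<in> comp v" by (simp add: comp_def)

lemma comp_eq: "u \<in> comp v \<Longrightarrow> comp u = comp v"
proof -
  assume "u \<in> comp v"
  then have uv: "(v, u) \<in> (adj_rel E)\<^sup>*" by (simp add: comp_def)
  have vu: "(u, v) \<in> (adj_rel E)\<^sup>*" using rt_sym[OF uv] .
  have 1: "(v, x) \<in> (adj_rel E)\<^sup>*" if "(u, x) \<in> (adj_rel E)\<^sup>*" for x
    using uv that by (rule rtrancl_trans)
  have 2: "(u, x) \<in> (adj_rel E)\<^sup>*" if "(v, x) \<in> (adj_rel E)\<^sup>*" for x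
    using vu that by (rule rtrancl_trans)
  show ?thesis unfolding comp_def using 1 2 by blast
qed

lemma comps_iff: "C \<in> components V E \<longleftrightarrow> (\<exists>v\<in>V. C = comp v)"
  by (auto simp: components_def comp_def)

lemma comp_subV: "C \<in> components V E \<Longrightarrow> C \<subseteq> V"
  using comps_iff comp_sub by blast

lemma comp_ne: "C \<in> components V E \<Longrightarrow> C \<noteq> {}"
  using comps_iff comp_self by blast

lemma comp_of: "x \<in> V \<Longrightarrow> comp x \<in> components V E"
  using comps_iff by blast

lemma comp_disj: "C \<in> components V E \<Longrightarrow> D \<in> components V E \<Longrightarrow> x \<in> C \<Longrightarrow> x \<in> D \<Longrightarrow> C = D"
proof -
  assume a: "C \<in> components V E" "D \<in> components V E" "x \<in> C" "x \<in> D"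
  obtain v where cv: "C = comp v" using a(1) unfolding comps_iff by blast
  obtain w where dw: "D = comp w" using a(2) unfolding comps_iff by blast
  have "x \<in> comp v" using a(3) cv by simp
  then have 1: "comp x = comp v" by (rule comp_eq)
  have "x \<in> comp w" using a(4) dw by simp
  then have 2: "comp x = comp w" by (rule comp_eq)
  show ?thesis using 1 2 cv dw by simp
qed

lemma comps_fin: "finite (components V E)"
  using finV by (simp add: components_def)

lemma edge_in_comp: "{u, v} \<in> E \<Longrightarrow> C \<in> components V E \<Longrightarrow> u \<in> C \<Longrightarrow> v \<in> C"
proof -
  assume a: "{u, v} \<in> E" "C \<in> components V E" "u \<in> C"
  then obtain w where "w \<in> V" "C = comp w" using comps_iff by blast
  moreover have "(w, u) \<in> (adj_rel E)\<^sup>*" using a calculation by (simp add: comp_def)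
  moreover have "(u, v) \<in> adj_rel E" using a(1) by (simp add: adj_iff)
  ultimately have "(w, v) \<in> (adj_rel E)\<^sup>*" by (meson rtrancl.rtrancl_into_rtrancl)
  then show ?thesis using \<open>C = comp w\<close> by (simp add: comp_def)
qed

lemma edge_comp: "e \<in> E \<Longrightarrow> C \<in> components V E \<Longrightarrow> e \<inter> C \<noteq> {} \<Longrightarrow> e \<subseteq> C"
proof -
  assume a: "e \<in> E" "C \<in> components V E" "e \<inter> C \<noteq> {}"
  then obtain u v where e: "e = {u,v}" using edgeE by blast
  show ?thesis
  proof (cases "u \<in> C")
    case True then show ?thesis using edge_in_comp a e by blast
  next
    case False
    then have "v \<in> C" using a e by blast
    have "{v, u} \<in> E" using a e by (simp add: insert_commute)
    then have "u \<in> C" using edge_in_comp a \<open>v \<in> C\<close> by blast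
    then show ?thesis using e \<open>v \<in> C\<close> by simp
  qed
qed

lemma edge_comp': "e \<in> E \<Longrightarrow> C \<in> components V E \<Longrightarrow> \<not> e \<subseteq> C \<Longrightarrow> e \<inter> C = {}"
  using edge_comp by blast

lemma aut_adj: "is_aut V E \<phi> \<Longrightarrow> u \<in> V \<Longrightarrow> v \<in> V \<Longrightarrow> {u, v} \<in> E \<longleftrightarrow> {\<phi> u, \<phi> v} \<in> E"
  by (simp add: is_aut_def)

lemma aut_inj: "is_aut V E \<phi> \<Longrightarrow> inj_on \<phi> V"
  by (simp add: is_aut_def bij_betw_def)

lemma aut_img: "is_aut V E \<phi> \<Longrightarrow> \<phi> ` V = V"
  by (simp add: is_aut_def bij_betw_def)

lemma aut_in: "is_aut V E \<phi> \<Longrightarrow> x \<in> V \<Longrightarrow> \<phi> x \<in> V"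
  using aut_img by blast

lemma aut_out: "is_aut V E \<phi> \<Longrightarrow> x \<notin> V \<Longrightarrow> \<phi> x = x"
  by (simp add: is_aut_def)

lemma aut_rt: "is_aut V E \<phi> \<Longrightarrow> (a, b) \<in> (adj_rel E)\<^sup>* \<Longrightarrow> a \<in> V \<Longrightarrow> (\<phi> a, \<phi> b) \<in> (adj_rel E)\<^sup>*"
proof -
  assume ph: "is_aut V E \<phi>" and ab: "(a, b) \<in> (adj_rel E)\<^sup>*" and aV: "a \<in> V"
  from ab show ?thesis
  proof (induction rule: rtrancl_induct)
    case base then show ?case by simp
  next
    case (step y z)
    then have "{y, z} \<in> E" by (simp add: adj_iff)
    then have "y \<in> V" "z \<in> V" using edgeV by auto
    then have "{\<phi> y, \<phi> z} \<in> E" using aut_adj[OF ph] \<open>{y, z} \<in> E\<close> by blast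
    then have "(\<phi> y, \<phi> z) \<in> adj_rel E" by (simp add: adj_iff)
    then show ?case using step.IH by (meson rtrancl.rtrancl_into_rtrancl)
  qed
qed

lemma aut_rt_back: "is_aut V E \<phi> \<Longrightarrow> (a, b) \<in> (adj_rel E)\<^sup>* \<Longrightarrow> x \<in> V \<Longrightarrow> \<phi> x = a
  \<Longrightarrow> y \<in> V \<Longrightarrow> \<phi> y = b \<Longrightarrow> (x, y) \<in> (adj_rel E)\<^sup>*"
proof -
  assume ph: "is_aut V E \<phi>" and ab: "(a, b) \<in> (adj_rel E)\<^sup>*" and xV: "x \<in> V" and xa: "\<phi> x = a"
  from ab show "y \<in> V \<Longrightarrow> \<phi> y = b \<Longrightarrow> (x, y) \<in> (adj_rel E)\<^sup>*"
  proof (induction arbitrary: y rule: rtrancl_induct)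
    case base
    then have "\<phi> x = \<phi> y" using xa by simp
    then have "x = y" using aut_inj[OF ph] xV base(1) by (simp add: inj_on_def)
    then show ?case by simp
  next
    case (step b' c)
    then have e: "{b', c} \<in> E" by (simp add: adj_iff)
    then have "b' \<in> V" using edgeV by auto
    then obtain z where zV: "z \<in> V" and zb: "\<phi> z = b'" using aut_img[OF ph] by (metis imageE)
    have "(x, z) \<in> (adj_rel E)\<^sup>*" using step.IH zV zb by blast
    moreover have "{\<phi> z, \<phi> y} \<in> E" using e zb step.prems by simp
    then have "{z, y} \<in> E" using aut_adj[OF ph zV step.prems(1)] by simp
    then have "(z, y) \<in> adj_rel E" by (simp add: adj_iff)
    ultimately show ?case by (meson rtrancl.rtrancl_into_rtrancl)
  qed
qed

lemma aut_comp: "is_aut V E \<phi> \<Longrightarrow> v \<in> V \<Longrightarrow> \<phi> ` comp v = comp (\<phi> v)"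
proof
  assume ph: "is_aut V E \<phi>" and vV: "v \<in> V"
  show "\<phi> ` comp v \<subseteq> comp (\<phi> v)"
  proof
    fix y assume "y \<in> \<phi> ` comp v"
    then obtain x where "x \<in> comp v" "y = \<phi> x" by blast
    then have "(v, x) \<in> (adj_rel E)\<^sup>*" by (simp add: comp_def)
    then have "(\<phi> v, \<phi> x) \<in> (adj_rel E)\<^sup>*" using aut_rt[OF ph] vV by blast
    then show "y \<in> comp (\<phi> v)" using \<open>y = \<phi> x\<close> by (simp add: comp_def)
  qed
  show "comp (\<phi> v) \<subseteq> \<phi> ` comp v"
  proof
    fix y assume "y \<in> comp (\<phi> v)"
    then have r: "(\<phi> v, y) \<in> (adj_rel E)\<^sup>*" by (simp add: comp_def)
    then have "y \<in> V" using rt_V aut_in[OF ph vV] by blast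
    then obtain x where xV: "x \<in> V" and xy: "y = \<phi> x" using aut_img[OF ph] by (metis imageE)
    have "(v, x) \<in> (adj_rel E)\<^sup>*" using aut_rt_back[OF ph r vV refl xV] xy by simp
    then show "y \<in> \<phi> ` comp v" using xy by (simp add: comp_def)
  qed
qed

lemma aut_comps: "is_aut V E \<phi> \<Longrightarrow> C \<in> components V E \<Longrightarrow> \<phi> ` C \<in> components V E"
proof -
  assume ph: "is_aut V E \<phi>" and C: "C \<in> components V E"
  then obtain v where vV: "v \<in> V" and cv: "C = comp v" unfolding comps_iff by blast
  then have "\<phi> ` C = comp (\<phi> v)" using aut_comp[OF ph vV] by simp
  then show ?thesis using comp_of aut_in[OF ph vV] by simp
qed

lemma Ec_mem: "{a, b} \<in> Ec C \<longleftrightarrow> {a, b} \<in> E \<and> a \<in> C \<and> b \<in> C"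
  by (simp add: induced_edges_def)

lemma Ec_sub: "Ec C \<subseteq> E" by (auto simp: induced_edges_def)

lemma no_cross: "C \<in> components V E \<Longrightarrow> u \<in> C \<Longrightarrow> v \<notin> C \<Longrightarrow> {u, v} \<notin> E \<and> {v, u} \<notin> E"
  using edge_in_comp by (metis insert_commute)

lemma restrict_aut:
  assumes ph: "is_aut V E \<phi>" and C: "C \<in> components V E" and fc: "\<phi> ` C = C"
  shows "is_aut C (Ec C) (\<lambda>x. if x \<in> C then \<phi> x else x)"
proof -
  have CV: "C \<subseteq> V" using comp_subV C .
  have "inj_on \<phi> C" using aut_inj[OF ph] CV inj_on_subset by blast
  then have "bij_betw \<phi> C C" using fc by (simp add: bij_betw_def)
  then have b: "bij_betw (\<lambda>x. if x \<in> C then \<phi> x else x) C C"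
    by (rule bij_betw_cong[THEN iffD1, rotated]) simp
  have a: "{u, v} \<in> Ec C \<longleftrightarrow> {\<phi> u, \<phi> v} \<in> Ec C" if "u \<in> C" "v \<in> C" for u v
  proof -
    have "\<phi> u \<in> C" "\<phi> v \<in> C" using fc that by auto
    moreover have "{u, v} \<in> E \<longleftrightarrow> {\<phi> u, \<phi> v} \<in> E" using aut_adj[OF ph] CV that by blast
    ultimately show ?thesis using that by (simp add: Ec_mem)
  qed
  show ?thesis unfolding is_aut_def using b a by simp
qed

lemma extend_aut:
  assumes C: "C \<in> components V E" and ps: "is_aut C (Ec C) \<psi>"
  shows "is_aut V E \<psi>"
proof -
  have CV: "C \<subseteq> V" using comp_subV C .
  have b1: "bij_betw \<psi> C C" using ps by (simp add: is_aut_def)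
  have out: "\<psi> x = x" if "x \<notin> C" for x using ps that by (simp add: is_aut_def)
  have b2: "bij_betw \<psi> (V - C) (V - C)"
    by (rule bij_betw_cong[THEN iffD2, of _ _ id]) (auto simp: out)
  have "bij_betw \<psi> (C \<union> (V - C)) (C \<union> (V - C))"
    by (rule bij_betw_combine[OF b1 b2]) blast
  moreover have "C \<union> (V - C) = V" using CV by blast
  ultimately have b: "bij_betw \<psi> V V" by simp
  have inC: "\<psi> x \<in> C" if "x \<in> C" for x using b1 that bij_betw_imp_surj_on by blast
  have a: "{u, v} \<in> E \<longleftrightarrow> {\<psi> u, \<psi> v} \<in> E" if "u \<in> V" "v \<in> V" for u v
  proof (cases "u \<in> C")
    case True
    note u = True
    show ?thesis
    proof (cases "v \<in> C")
      case True
      have "{u, v} \<in> Ec C \<longleftrightarrow> {\<psi> u, \<psi> v} \<in> Ec C" using ps u True by (simp add: is_aut_def)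
      then show ?thesis using u True inC by (simp add: Ec_mem)
    next
      case False
      then show ?thesis using no_cross[OF C] u inC out by metis
    qed
  next
    case False
    note u = False
    show ?thesis
    proof (cases "v \<in> C")
      case True
      then show ?thesis using no_cross[OF C] u inC out by metis
    next
      case False
      then show ?thesis using u out by simp
    qed
  qed
  show ?thesis unfolding is_aut_def using b a CV out by blast
qed

lemma fixes_id_on: "(\<And>x. x \<in> e \<Longrightarrow> \<psi> x = x) \<Longrightarrow> fixes_edge \<psi> e"
  by (simp add: fixes_edge_def)

lemma restrict_det:
  assumes T: "edge_determining V E T" and C: "C \<in> components V E"
  shows "edge_determining C (Ec C) (T \<inter> Ec C)"
  unfolding edge_determining_def
proof (intro conjI allI impI)
  show "T \<inter> Ec C \<subseteq> Ec C" by blast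
  fix \<psi> assume a: "is_aut C (Ec C) \<psi> \<and> (\<forall>e\<in>T \<inter> Ec C. fixes_edge \<psi> e)"
  have ps: "is_aut V E \<psi>" using extend_aut[OF C] a by blast
  have TE: "T \<subseteq> E" using T by (simp add: edge_determining_def)
  have "fixes_edge \<psi> e" if eT: "e \<in> T" for e
  proof (cases "e \<subseteq> C")
    case True
    then have "e \<in> T \<inter> Ec C" using eT TE by (auto simp: induced_edges_def)
    then show ?thesis using a by blast
  next
    case False
    then have "e \<inter> C = {}" using edge_comp'[OF _ C] eT TE by blast
    then have "\<psi> x = x" if "x \<in> e" for x using a that by (auto simp: is_aut_def)
    then show ?thesis by (rule fixes_id_on)
  qed
  then show "\<psi> = id" using T ps by (simp add: edge_determining_def)
qed

lemma fix_edge_mem: "fixes_edge \<phi> {v, a} \<Longrightarrow> \<phi> v = v \<or> \<phi> v = a"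
  by (auto simp: fixes_edge_def)

lemma isolated_comp:
  assumes vV: "v \<in> V" and iso: "\<forall>b. {v, b} \<notin> E"
  shows "comp v = {v}" "is_complete_graph 1 (comp v) (Ec (comp v))"
proof -
  have "x = v" if "(v, x) \<in> (adj_rel E)\<^sup>*" for x
    using that
  proof (cases rule: converse_rtranclE)
    case base then show ?thesis by simp
  next
    case (step y)
    then show ?thesis using iso by (simp add: adj_iff)
  qed
  then show cv: "comp v = {v}" unfolding comp_def by auto
  have "Ec {v} = {}"
  proof -
    have "e \<notin> Ec {v}" for e
    proof
      assume "e \<in> Ec {v}"
      then have "e \<in> E" "e \<subseteq> {v}" by (auto simp: induced_edges_def)
      then obtain a b where "a \<noteq> b" "e = {a, b}" using edgeE by blast
      then show False using \<open>e \<subseteq> {v}\<close> by auto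
    qed
    then show ?thesis by blast
  qed
  then show "is_complete_graph 1 (comp v) (Ec (comp v))"
    unfolding is_complete_graph_def cv by auto
qed

lemma K2_comp:
  assumes vw: "{v, w} \<in> E" and nv: "\<forall>b. {v, b} \<in> E \<longrightarrow> b = w" and nw: "\<forall>b. {w, b} \<in> E \<longrightarrow> b = v"
  shows "comp v = {v, w}" "is_complete_graph 2 (comp v) (Ec (comp v))"
proof -
  have vne: "v \<noteq> w" using edgeV vw by blast
  have "x \<in> {v, w}" if "(v, x) \<in> (adj_rel E)\<^sup>*" for x
    using that
  proof (induction rule: rtrancl_induct)
    case base then show ?case by simp
  next
    case (step y z)
    then have e: "{y, z} \<in> E" by (simp add: adj_iff)
    show ?case
    proof (cases "y = v")
      case True then show ?thesis using e nv by auto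
    next
      case False then have "y = w" using step.IH by simp
      then show ?thesis using e nw by auto
    qed
  qed
  moreover have "(v, w) \<in> (adj_rel E)\<^sup>*" using vw by (simp add: adj_iff r_into_rtrancl)
  ultimately show cv: "comp v = {v, w}" unfolding comp_def by auto
  have 1: "Ec {v, w} = {{v, w}}"
  proof
    show "{{v, w}} \<subseteq> Ec {v, w}" using vw by (simp add: induced_edges_def)
    show "Ec {v, w} \<subseteq> {{v, w}}"
    proof
      fix e assume "e \<in> Ec {v, w}"
      then have "e \<in> E" "e \<subseteq> {v, w}" by (auto simp: induced_edges_def)
      then obtain a b where "a \<noteq> b" "e = {a, b}" using edgeE by blast
      then show "e \<in> {{v, w}}" using \<open>e \<subseteq> {v, w}\<close> by auto
    qed
  qed
  have 2: "{e. \<exists>u u'. u \<noteq> u' \<and> u \<in> {v, w} \<and> u' \<in> {v, w} \<and> e = {u, u'}} = {{v, w}}"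
    using vne by (auto simp: insert_commute)
  show "is_complete_graph 2 (comp v) (Ec (comp v))"
    unfolding is_complete_graph_def cv using 1 2 vne by simp
qed

lemma E_det:
  assumes K1: "card {C \<in> components V E. is_complete_graph 1 C (Ec C)} \<le> 1"
    and K2: "\<forall>C \<in> components V E. \<not> is_complete_graph 2 C (Ec C)"
  shows "edge_determining V E E"
  unfolding edge_determining_def
proof (intro conjI allI impI)
  show "E \<subseteq> E" by simp
  fix \<phi> assume a: "is_aut V E \<phi> \<and> (\<forall>e\<in>E. fixes_edge \<phi> e)"
  then have ph: "is_aut V E \<phi>" and fx: "\<And>e. e \<in> E \<Longrightarrow> fixes_edge \<phi> e" by auto
  have A: "\<phi> v = v" if "{v, a} \<in> E" "{v, b} \<in> E" "a \<noteq> b" for v a b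
    using fix_edge_mem[OF fx[OF that(1)]] fix_edge_mem[OF fx[OF that(2)]] that(3) by auto
  have B: "\<phi> v = v" if vw: "{v, w} \<in> E" for v w
  proof (cases "\<exists>b. {v, b} \<in> E \<and> b \<noteq> w")
    case True then show ?thesis using A vw by blast
  next
    case False
    then have nv: "\<forall>b. {v, b} \<in> E \<longrightarrow> b = w" by blast
    have wv: "{w, v} \<in> E" using vw by (simp add: insert_commute)
    show ?thesis
    proof (cases "\<exists>b. {w, b} \<in> E \<and> b \<noteq> v")
      case True
      then have fw: "\<phi> w = w" using A wv by blast
      have vne: "v \<noteq> w" "v \<in> V" "w \<in> V" using edgeV vw by auto
      have "\<phi> v = v \<or> \<phi> v = w" using fix_edge_mem[OF fx[OF vw]] .
      moreover have "\<phi> v \<noteq> \<phi> w" using aut_inj[OF ph] vne by (meson inj_on_contraD)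
      ultimately show ?thesis using fw by auto
    next
      case False
      then have nw: "\<forall>b. {w, b} \<in> E \<longrightarrow> b = v" by blast
      have "is_complete_graph 2 (comp v) (Ec (comp v))" using K2_comp[OF vw nv nw] by simp
      moreover have "comp v \<in> components V E" using comp_of edgeV vw by blast
      ultimately show ?thesis using K2 by blast
    qed
  qed
  have "\<phi> v = v" if vV: "v \<in> V" for v
  proof (cases "\<exists>b. {v, b} \<in> E")
    case True then show ?thesis using B by blast
  next
    case False
    then have iv: "\<forall>b. {v, b} \<notin> E" by blast
    show ?thesis
    proof (rule ccontr)
      assume ne: "\<phi> v \<noteq> v"
      define u where "u = \<phi> v"
      have uV: "u \<in> V" using aut_in[OF ph vV] u_def by simp
      show False
      proof (cases "\<exists>b. {u, b} \<in> E")
        case True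
        then have "\<phi> u = u" using B by blast
        then have "\<phi> u = \<phi> v" using u_def by simp
        then have "u = v" using aut_inj[OF ph] uV vV by (meson inj_onD)
        then show False using ne u_def by simp
      next
        case False
        then have iu: "\<forall>b. {u, b} \<notin> E" by blast
        let ?S = "{C \<in> components V E. is_complete_graph 1 C (Ec C)}"
        have "comp v \<in> ?S" using isolated_comp[OF vV iv] comp_of[OF vV] by simp
        moreover have "comp u \<in> ?S" using isolated_comp[OF uV iu] comp_of[OF uV] by simp
        moreover have "comp u \<noteq> comp v" using isolated_comp(1)[OF vV iv] isolated_comp(1)[OF uV iu] ne u_def by simp
        moreover have "finite ?S" using comps_fin by simp
        ultimately have "card {comp u, comp v} \<le> card ?S" by (meson card_mono empty_subsetI insert_subset)
        then show False using K1 \<open>comp u \<noteq> comp v\<close> by simp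
      qed
    qed
  qed
  then show "\<phi> = id" using aut_out[OF ph] by (metis eq_id_iff)
qed

lemma swap:
  assumes C: "C \<in> components V E" and D: "D \<in> components V E" and CD: "C \<noteq> D"
    and iso: "graph_iso C (Ec C) D (Ec D)" and TE: "T \<subseteq> E"
    and TC: "T \<inter> Ec C = {}" and TD: "T \<inter> Ec D = {}"
  shows "\<not> edge_determining V E T"
proof
  assume det: "edge_determining V E T"
  obtain f where bf: "bij_betw f C D" and fa: "\<forall>u\<in>C. \<forall>v\<in>C. {u, v} \<in> Ec C \<longleftrightarrow> {f u, f v} \<in> Ec D"
    using iso unfolding graph_iso_def by blast
  define g where "g = inv_into C f"
  have bg: "bij_betw g D C" unfolding g_def using bf by (rule bij_betw_inv_into)
  have gf: "g (f x) = x" if "x \<in> C" for x unfolding g_def using bf that by (rule bij_betw_inv_into_left)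
  have fg: "f (g x) = x" if "x \<in> D" for x unfolding g_def using bf that by (rule bij_betw_inv_into_right)
  have fC: "f x \<in> D" if "x \<in> C" for x using bf that bij_betw_imp_surj_on by blast
  have gD: "g x \<in> C" if "x \<in> D" for x using bg that bij_betw_imp_surj_on by blast
  have disj: "x \<notin> D" if "x \<in> C" for x using comp_disj[OF C D] CD that by blast
  have disj2: "x \<notin> C" if "x \<in> D" for x using disj that by blast
  have CV: "C \<subseteq> V" and DV: "D \<subseteq> V" using comp_subV C D by auto
  define s where "s x = (if x \<in> C then f x else if x \<in> D then g x else x)" for x
  have sC: "s x = f x" if "x \<in> C" for x using that s_def by simp
  have sD: "s x = g x" if "x \<in> D" for x using that s_def disj by auto
  have sO: "s x = x" if "x \<notin> C" "x \<notin> D" for x using that s_def by simp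
  have inC: "s x \<in> C \<longleftrightarrow> x \<in> D" for x
    by (cases "x \<in> C"; cases "x \<in> D") (auto simp: sC sD sO fC gD disj disj2)
  have inD: "s x \<in> D \<longleftrightarrow> x \<in> C" for x
    by (cases "x \<in> C"; cases "x \<in> D") (auto simp: sC sD sO fC gD disj disj2)
  have ss: "s (s x) = x" for x
    by (cases "x \<in> C"; cases "x \<in> D") (auto simp: sC sD sO fC gD gf fg disj disj2)
  have sV: "s x \<in> V" if "x \<in> V" for x
    by (cases "x \<in> C"; cases "x \<in> D") (use that CV DV fC gD in \<open>auto simp: sC sD sO\<close>)
  have bs: "bij_betw s V V"
    by (rule bij_betw_byWitness[where f' = s]) (auto simp: ss sV)
  have out: "s x = x" if "x \<notin> V" for x using that CV DV sO by blast
  have adj: "{u, v} \<in> E \<longleftrightarrow> {s u, s v} \<in> E" if uV: "u \<in> V" and vV: "v \<in> V" for u v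
  proof -
    consider "(u \<in> C) \<noteq> (v \<in> C)" | "(u \<in> D) \<noteq> (v \<in> D)" | "u \<in> C" "v \<in> C" | "u \<in> D" "v \<in> D"
      | "u \<notin> C" "v \<notin> C" "u \<notin> D" "v \<notin> D" by blast
    then show ?thesis
    proof cases
      case 1
      then have l: "{u, v} \<notin> E" using no_cross[OF C] by metis
      have "(s u \<in> D) \<noteq> (s v \<in> D)" using 1 inD by simp
      then have "{s u, s v} \<notin> E" using no_cross[OF D] by metis
      then show ?thesis using l by simp
    next
      case 2
      then have l: "{u, v} \<notin> E" using no_cross[OF D] by metis
      have "(s u \<in> C) \<noteq> (s v \<in> C)" using 2 inC by simp
      then have "{s u, s v} \<notin> E" using no_cross[OF C] by metis
      then show ?thesis using l by simp
    next
      case 3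
      have "{u, v} \<in> Ec C \<longleftrightarrow> {f u, f v} \<in> Ec D" using fa 3 by blast
      then show ?thesis using 3 fC by (simp add: Ec_mem sC)
    next
      case 4
      have "{g u, g v} \<in> Ec C \<longleftrightarrow> {f (g u), f (g v)} \<in> Ec D" using fa 4 gD by blast
      then show ?thesis using 4 gD by (simp add: Ec_mem sD fg)
    next
      case 5
      then show ?thesis by (simp add: sO)
    qed
  qed
  have as: "is_aut V E s" unfolding is_aut_def using bs out adj by blast
  have "fixes_edge s e" if eT: "e \<in> T" for e
  proof -
    have eE: "e \<in> E" using eT TE by blast
    have "\<not> e \<subseteq> C" using eT eE TC by (auto simp: induced_edges_def)
    then have 1: "e \<inter> C = {}" using edge_comp'[OF eE C] by blast
    have "\<not> e \<subseteq> D" using eT eE TD by (auto simp: induced_edges_def)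
    then have 2: "e \<inter> D = {}" using edge_comp'[OF eE D] by blast
    show ?thesis by (rule fixes_id_on) (use 1 2 sO in blast)
  qed
  then have "s = id" using det as by (simp add: edge_determining_def)
  moreover obtain c where "c \<in> C" using comp_ne[OF C] by blast
  moreover have "s c \<in> D" using inD \<open>c \<in> C\<close> by simp
  ultimately show False using disj by simp
qed

lemma iso_refl: "graph_iso A E1 A E1"
  unfolding graph_iso_def by (rule exI[of _ id]) simp

lemma iso_sym: assumes "graph_iso A E1 B E2" shows "graph_iso B E2 A E1"
proof -
  obtain f where bf: "bij_betw f A B" and fa: "\<forall>u\<in>A. \<forall>v\<in>A. {u, v} \<in> E1 \<longleftrightarrow> {f u, f v} \<in> E2"
    using assms unfolding graph_iso_def by blast
  define g where "g = inv_into A f"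
  have bg: "bij_betw g B A" unfolding g_def using bf by (rule bij_betw_inv_into)
  have fg: "f (g x) = x" if "x \<in> B" for x unfolding g_def using bf that by (rule bij_betw_inv_into_right)
  have gB: "g x \<in> A" if "x \<in> B" for x using bg that bij_betw_imp_surj_on by blast
  have "{u, v} \<in> E2 \<longleftrightarrow> {g u, g v} \<in> E1" if "u \<in> B" "v \<in> B" for u v
    using fa gB[OF that(1)] gB[OF that(2)] fg[OF that(1)] fg[OF that(2)] by metis
  then show ?thesis unfolding graph_iso_def using bg by blast
qed

lemma iso_trans: assumes "graph_iso A E1 B E2" "graph_iso B E2 C E3" shows "graph_iso A E1 C E3"
proof -
  obtain f where bf: "bij_betw f A B" and fa: "\<forall>u\<in>A. \<forall>v\<in>A. {u, v} \<in> E1 \<longleftrightarrow> {f u, f v} \<in> E2"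
    using assms(1) unfolding graph_iso_def by blast
  obtain h where bh: "bij_betw h B C" and ha: "\<forall>u\<in>B. \<forall>v\<in>B. {u, v} \<in> E2 \<longleftrightarrow> {h u, h v} \<in> E3"
    using assms(2) unfolding graph_iso_def by blast
  have fA: "f x \<in> B" if "x \<in> A" for x using bf that bij_betw_imp_surj_on by blast
  have "bij_betw (h \<circ> f) A C" using bf bh by (rule bij_betw_trans)
  moreover have "{u, v} \<in> E1 \<longleftrightarrow> {(h \<circ> f) u, (h \<circ> f) v} \<in> E3" if "u \<in> A" "v \<in> A" for u v
    using fa ha fA[OF that(1)] fA[OF that(2)] that by simp
  ultimately show ?thesis unfolding graph_iso_def by blast
qed

lemma iso_card: "graph_iso A E1 B E2 \<Longrightarrow> card A = card B"
  unfolding graph_iso_def using bij_betw_same_card by blast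

lemma card1_K1:
  assumes C: "C \<in> components V E" and c1: "card C = 1"
  shows "is_complete_graph 1 C (Ec C)"
proof -
  obtain x where Cx: "C = {x}" using c1 card_1_singletonE by blast
  have "e \<notin> Ec C" for e
  proof
    assume "e \<in> Ec C"
    then have "e \<in> E" "e \<subseteq> {x}" using Cx by (auto simp: induced_edges_def)
    then obtain a b where "a \<noteq> b" "e = {a, b}" using edgeE by blast
    then show False using \<open>e \<subseteq> {x}\<close> by auto
  qed
  then have "Ec C = {}" by blast
  then show ?thesis unfolding is_complete_graph_def using Cx by auto
qed

lemma comp_edge:
  assumes C: "C \<in> components V E" and c1: "card C \<noteq> 1"
  shows "\<exists>e. e \<in> Ec C"
proof -
  obtain v where vV: "v \<in> V" and cv: "C = comp v" using C unfolding comps_iff by blast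
  have fin: "finite C" using comp_subV[OF C] finV finite_subset by blast
  have "\<exists>u\<in>C. u \<noteq> v"
  proof (rule ccontr)
    assume "\<not> (\<exists>u\<in>C. u \<noteq> v)"
    then have "C = {v}" using comp_self cv by blast
    then show False using c1 by simp
  qed
  then obtain u where "u \<in> C" "u \<noteq> v" by blast
  then have r: "(v, u) \<in> (adj_rel E)\<^sup>*" using cv by (simp add: comp_def)
  then obtain y where "(v, y) \<in> adj_rel E"
    using \<open>u \<noteq> v\<close> by (cases rule: converse_rtranclE) auto
  then have e: "{v, y} \<in> E" by (simp add: adj_iff)
  have vC: "v \<in> C" using cv comp_self by simp
  then have "y \<in> C" using edge_in_comp[OF e C] by simp
  then have "{v, y} \<in> Ec C" using e vC by (simp add: Ec_mem)
  then show ?thesis by blast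
qed

lemma Ec_fin: "finite (Ec C)" using finE Ec_sub finite_subset by blast

end

locale sg2 = sg +
  assumes K1: "card {C \<in> components V E. is_complete_graph 1 C (induced_edges E C)} \<le> 1"
    and K2: "\<forall>C \<in> components V E. \<not> is_complete_graph 2 C (induced_edges E C)"
begin

lemma Edet: "edge_determining V E E" using E_det K1 K2 by blast

lemma det_exists: "C \<in> components V E \<Longrightarrow> edge_determining C (Ec C) (Ec C)"
  using restrict_det[OF Edet] by (metis Ec_sub inf.absorb2)

lemma det_opt: "C \<in> components V E \<Longrightarrow> \<exists>T. edge_determining C (Ec C) T \<and> card T = det_index C (Ec C)"
proof -
  assume C: "C \<in> components V E"
  have "\<exists>n T. edge_determining C (Ec C) T \<and> card T = n" using det_exists[OF C] by blast
  from LeastI_ex[OF this] show ?thesis unfolding det_index_def .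
qed

lemma det_le: "edge_determining C (Ec C) T \<Longrightarrow> det_index C (Ec C) \<le> card T"
  unfolding det_index_def by (rule Least_le) blast

lemma Gdet_opt: "\<exists>T. edge_determining V E T \<and> card T = det_index V E"
proof -
  have "\<exists>n T. edge_determining V E T \<and> card T = n" using Edet by blast
  from LeastI_ex[OF this] show ?thesis unfolding det_index_def .
qed

lemma Gdet_le: "edge_determining V E T \<Longrightarrow> det_index V E \<le> card T"
  unfolding det_index_def by (rule Least_le) blast

lemma rigid:
  assumes C: "C \<in> components V E" and d0: "det_index C (Ec C) = 0" and ps: "is_aut C (Ec C) \<psi>"
  shows "\<psi> = id"
proof -
  obtain T where T: "edge_determining C (Ec C) T" "card T = 0" using det_opt[OF C] d0 by auto
  have "T \<subseteq> Ec C" using T by (simp add: edge_determining_def)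
  then have "finite T" using Ec_fin finite_subset by blast
  then have "T = {}" using T by simp
  then show ?thesis using T ps by (simp add: edge_determining_def)
qed

lemma Ec_disj: "C \<in> components V E \<Longrightarrow> D \<in> components V E \<Longrightarrow> C \<noteq> D \<Longrightarrow> Ec C \<inter> Ec D = {}"
proof (rule ccontr)
  assume C: "C \<in> components V E" and D: "D \<in> components V E" and CD: "C \<noteq> D" and ne: "Ec C \<inter> Ec D \<noteq> {}"
  then obtain e where "e \<in> Ec C" "e \<in> Ec D" by blast
  then have "e \<in> E" "e \<subseteq> C" "e \<subseteq> D" by (auto simp: induced_edges_def)
  then obtain x where "x \<in> C" "x \<in> D" using edge_ne by blast
  then show False using comp_disj[OF C D] CD by blast
qed

lemma anchor:
  assumes ph: "is_aut V E \<phi>" and C: "C \<in> components V E" and eC: "e \<in> Ec C" and fe: "fixes_edge \<phi> e"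
  shows "\<phi> ` C = C"
proof -
  have eE: "e \<in> E" and eCs: "e \<subseteq> C" using eC by (auto simp: induced_edges_def)
  obtain x where xe: "x \<in> e" using edge_ne[OF eE] by blast
  have "\<phi> x \<in> e" using fe xe by (auto simp: fixes_edge_def)
  then have "\<phi> x \<in> C" using eCs by blast
  moreover have "\<phi> x \<in> \<phi> ` C" using xe eCs by blast
  ultimately show ?thesis using comp_disj[OF aut_comps[OF ph C] C] by blast
qed

theorem main:
  fixes P Q R rel
  defines "P \<equiv> {C \<in> components V E. det_index C (Ec C) > 0}"
    and "Q \<equiv> {C \<in> components V E. det_index C (Ec C) = 0}"
  defines "rel \<equiv> {(C, D). C \<in> Q \<and> D \<in> Q \<and> graph_iso C (Ec C) D (Ec D)}"
  defines "R \<equiv> Q // rel"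
  shows "int (det_index V E) = int (card Q) - int (card R) + (\<Sum>C\<in>P. int (det_index C (Ec C)))"
proof -
  define dd where "dd C = det_index C (Ec C)" for C
  have compsPQ: "components V E = P \<union> Q" unfolding P_def Q_def by auto
  have PQ: "P \<inter> Q = {}" unfolding P_def Q_def by auto
  have finP: "finite P" and finQ: "finite Q" using comps_fin compsPQ by (auto intro: finite_subset)
  have Pc: "C \<in> components V E" if "C \<in> P" for C using that P_def by simp
  have Qc: "C \<in> components V E" if "C \<in> Q" for C using that Q_def by simp
  have eqv: "equiv Q rel"
    unfolding equiv_def refl_on_def sym_def trans_def rel_def
    using iso_refl iso_sym iso_trans by blast
  have finR: "finite R" unfolding R_def using finQ eqv by (metis finite_quotient equiv_type)
  have cls: "X = rel `` {C}" if XR: "X \<in> R" and CX: "C \<in> X" for X C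
  proof -
    obtain x where "X = rel `` {x}" "x \<in> Q" using XR unfolding R_def by (rule quotientE)
    then have "(x, C) \<in> rel" using CX by simp
    then show ?thesis using \<open>X = rel `` {x}\<close> eqv equiv_class_eq_iff by metis
  qed
  have clsR: "rel `` {C} \<in> R" if "C \<in> Q" for C unfolding R_def using that by (rule quotientI)
  have self: "C \<in> rel `` {C}" if "C \<in> Q" for C using eqv that by (rule equiv_class_self)

  obtain T0 where T0: "edge_determining V E T0" "card T0 = det_index V E" using Gdet_opt by blast
  have T0E: "T0 \<subseteq> E" using T0 by (simp add: edge_determining_def)
  have finT0: "finite T0" using T0E finE finite_subset by blast
  define M where "M = {C \<in> Q. T0 \<inter> Ec C \<noteq> {}}"
  have MQ: "M \<subseteq> Q" unfolding M_def by blast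
  have inj: "inj_on (\<lambda>C. rel `` {C}) (Q - M)"
  proof (rule inj_onI)
    fix C C' assume a: "C \<in> Q - M" "C' \<in> Q - M" "rel `` {C} = rel `` {C'}"
    then have "(C, C') \<in> rel" using self[of C'] by auto
    then have iso: "graph_iso C (Ec C) C' (Ec C')" unfolding rel_def by simp
    show "C = C'"
    proof (rule ccontr)
      assume "C \<noteq> C'"
      moreover have "T0 \<inter> Ec C = {}" "T0 \<inter> Ec C' = {}" using a M_def by auto
      ultimately show False using swap[OF Qc Qc _ iso T0E] a T0(1) by blast
    qed
  qed
  have "(\<lambda>C. rel `` {C}) ` (Q - M) \<subseteq> R" using clsR by blast
  then have cQM: "card (Q - M) \<le> card R" using card_inj_on_le[OF inj _ finR] by blast
  have cM: "card M = card Q - card (Q - M)" using MQ finQ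
    by (metis card_Diff_subset card_mono diff_diff_cancel finite_subset Diff_subset finite_Diff)
  have cQM2: "card (Q - M) \<le> card Q" using finQ by (simp add: card_mono)
  define F where "F = P \<union> M"
  have finF: "finite F" unfolding F_def using finP finQ MQ finite_subset by blast
  have Fc: "C \<in> components V E" if "C \<in> F" for C using that Pc Qc MQ F_def by blast
  have "card (\<Union>C\<in>F. T0 \<inter> Ec C) = (\<Sum>C\<in>F. card (T0 \<inter> Ec C))"
  proof (rule card_UN_disjoint[OF finF])
    show "\<forall>i\<in>F. finite (T0 \<inter> Ec i)" using finT0 by blast
    show "\<forall>i\<in>F. \<forall>j\<in>F. i \<noteq> j \<longrightarrow> T0 \<inter> Ec i \<inter> (T0 \<inter> Ec j) = {}"
      using Ec_disj Fc by blast
  qed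
  moreover have "card (\<Union>C\<in>F. T0 \<inter> Ec C) \<le> card T0" using finT0 by (intro card_mono) auto
  moreover have "(\<Sum>C\<in>F. card (T0 \<inter> Ec C)) = (\<Sum>C\<in>P. card (T0 \<inter> Ec C)) + (\<Sum>C\<in>M. card (T0 \<inter> Ec C))"
    unfolding F_def using finP finQ MQ PQ by (intro sum.union_disjoint) (auto intro: finite_subset)
  moreover have "(\<Sum>C\<in>P. dd C) \<le> (\<Sum>C\<in>P. card (T0 \<inter> Ec C))"
  proof (rule sum_mono)
    fix C assume "C \<in> P"
    then show "dd C \<le> card (T0 \<inter> Ec C)" unfolding dd_def using det_le restrict_det[OF T0(1) Pc] by blast
  qed
  moreover have "card M \<le> (\<Sum>C\<in>M. card (T0 \<inter> Ec C))"
  proof -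
    have "(\<Sum>C\<in>M. (1::nat)) \<le> (\<Sum>C\<in>M. card (T0 \<inter> Ec C))"
    proof (rule sum_mono)
      fix C assume "C \<in> M"
      then have "T0 \<inter> Ec C \<noteq> {}" using M_def by simp
      then show "1 \<le> card (T0 \<inter> Ec C)" using finT0 by (simp add: Suc_leI card_gt_0_iff)
    qed
    then show ?thesis by simp
  qed
  ultimately have LB: "(\<Sum>C\<in>P. dd C) + card M \<le> det_index V E" using T0(2) by linarith

  define TC where "TC C = (SOME T. edge_determining C (Ec C) T \<and> card T = dd C)" for C
  have TC: "edge_determining C (Ec C) (TC C) \<and> card (TC C) = dd C" if "C \<in> components V E" for C
    unfolding TC_def dd_def using det_opt[OF that] by (rule someI_ex)
  define rep where "rep X = (SOME C. C \<in> X)" for X :: "'a set set"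
  have repX: "rep X \<in> X" if XR: "X \<in> R" for X
  proof -
    obtain x where "X = rel `` {x}" "x \<in> Q" using XR unfolding R_def by (rule quotientE)
    then have "x \<in> X" using self by simp
    then show ?thesis unfolding rep_def by (rule someI)
  qed
  have XQ: "X \<subseteq> Q" if "X \<in> R" for X using that unfolding R_def using eqv in_quotient_imp_subset by blast
  define U where "U = rep ` R"
  have UQ: "U \<subseteq> Q" unfolding U_def using repX XQ by blast
  have injrep: "inj_on rep R"
  proof (rule inj_onI)
    fix X Y assume a: "X \<in> R" "Y \<in> R" "rep X = rep Y"
    then have "rep X \<in> X \<inter> Y" using repX[OF a(1)] repX[OF a(2)] by simp
    then show "X = Y" using quotient_disj[OF eqv] a unfolding R_def by blast
  qed
  have cU: "card U = card R" unfolding U_def using injrep by (simp add: card_image)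
  define Mk where "Mk = Q - U"
  have cMk: "card Mk = card Q - card U" unfolding Mk_def using UQ finQ by (simp add: card_Diff_subset finite_subset)
  have cUQ: "card U \<le> card Q" using UQ finQ by (simp add: card_mono)
  have Mk_edge: "\<exists>e. e \<in> Ec C" if CM: "C \<in> Mk" for C
  proof -
    have CQ: "C \<in> Q" and CU: "C \<notin> U" using CM Mk_def by auto
    show ?thesis
    proof (rule comp_edge[OF Qc[OF CQ]], rule notI)
      assume c1: "card C = 1"
      define X where "X = rel `` {C}"
      have XR: "X \<in> R" using clsR CQ X_def by simp
      have r: "rep X \<in> X" using repX XR .
      then have "(C, rep X) \<in> rel" using X_def by simp
      then have iso: "graph_iso C (Ec C) (rep X) (Ec (rep X))" and rQ: "rep X \<in> Q" unfolding rel_def by auto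
      have ne: "rep X \<noteq> C" using CU XR U_def by blast
      have "card (rep X) = 1" using iso_card[OF iso] c1 by simp
      then have k2: "is_complete_graph 1 (rep X) (Ec (rep X))" using card1_K1 Qc[OF rQ] by blast
      have k1: "is_complete_graph 1 C (Ec C)" using card1_K1 Qc[OF CQ] c1 by blast
      let ?S = "{C \<in> components V E. is_complete_graph 1 C (Ec C)}"
      have "finite ?S" using comps_fin by simp
      moreover have "{C, rep X} \<subseteq> ?S" using k1 k2 Qc[OF CQ] Qc[OF rQ] by blast
      ultimately have "card {C, rep X} \<le> card ?S" by (rule card_mono)
      then show False using K1 ne by simp
    qed
  qed
  define ed where "ed C = (SOME e. e \<in> Ec C)" for C
  have edC: "ed C \<in> Ec C" if "C \<in> Mk" for C unfolding ed_def using Mk_edge[OF that] by (rule someI_ex)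
  define T where "T = (\<Union>C\<in>P. TC C) \<union> ed ` Mk"
  have finMk: "finite Mk" unfolding Mk_def using finQ by simp
  have "card T \<le> card (\<Union>C\<in>P. TC C) + card (ed ` Mk)" unfolding T_def by (rule card_Un_le)
  moreover have "card (\<Union>C\<in>P. TC C) \<le> (\<Sum>C\<in>P. card (TC C))" using finP by (rule card_UN_le)
  moreover have "(\<Sum>C\<in>P. card (TC C)) = (\<Sum>C\<in>P. dd C)" using TC Pc by (intro sum.cong) auto
  moreover have "card (ed ` Mk) \<le> card Mk" using finMk by (rule card_image_le)
  ultimately have cT: "card T \<le> (\<Sum>C\<in>P. dd C) + card Mk" by linarith
  have TCsub: "TC C \<subseteq> Ec C" if "C \<in> P" for C using TC[OF Pc[OF that]] by (simp add: edge_determining_def)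
  have TE: "T \<subseteq> E" unfolding T_def using TCsub edC Ec_sub by blast
  have Tdet: "edge_determining V E T"
    unfolding edge_determining_def
  proof (intro conjI allI impI)
    show "T \<subseteq> E" by (rule TE)
    fix \<phi> assume a: "is_aut V E \<phi> \<and> (\<forall>e\<in>T. fixes_edge \<phi> e)"
    then have ph: "is_aut V E \<phi>" and fx: "\<And>e. e \<in> T \<Longrightarrow> fixes_edge \<phi> e" by auto
    have fixP: "\<phi> ` C = C" if "C \<in> P" for C
    proof -
      have "dd C > 0" using that P_def dd_def by simp
      then have "TC C \<noteq> {}" using TC[OF Pc[OF that]] by auto
      then obtain e where "e \<in> TC C" by blast
      then show ?thesis using anchor[OF ph Pc[OF that]] TCsub[OF that] fx T_def that by blast
    qed
    have fixMk: "\<phi> ` C = C" if "C \<in> Mk" for C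
    proof -
      have "ed C \<in> T" using that T_def by blast
      then show ?thesis using anchor[OF ph Qc edC[OF that] fx] that Mk_def by blast
    qed
    have fixU: "\<phi> ` C = C" if CU: "C \<in> U" for C
    proof (rule ccontr)
      assume ne: "\<phi> ` C \<noteq> C"
      have CQ: "C \<in> Q" using CU UQ by blast
      have CC: "C \<in> components V E" using Qc[OF CQ] .
      define D where "D = \<phi> ` C"
      have DC: "D \<in> components V E" using aut_comps[OF ph CC] D_def by simp
      have CV: "C \<subseteq> V" and DV: "D \<subseteq> V" using comp_subV CC DC by auto
      have DU: "D \<in> U"
      proof (rule ccontr)
        assume "D \<notin> U"
        then have "D \<in> P \<or> D \<in> Mk" using DC compsPQ Mk_def by blast
        then have "\<phi> ` D = D" using fixP fixMk by blast
        then have "\<phi> ` D = \<phi> ` C" using D_def by simp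
        then have "D = C" using inj_on_image_eq_iff[OF aut_inj[OF ph] DV CV] by simp
        then show False using ne D_def by simp
      qed
      have DQ: "D \<in> Q" using DU UQ by blast
      have "inj_on \<phi> C" using aut_inj[OF ph] CV inj_on_subset by blast
      then have bij: "bij_betw \<phi> C D" using D_def by (simp add: bij_betw_def)
      have "{u, v} \<in> Ec C \<longleftrightarrow> {\<phi> u, \<phi> v} \<in> Ec D" if "u \<in> C" "v \<in> C" for u v
      proof -
        have "\<phi> u \<in> D" "\<phi> v \<in> D" using that D_def by auto
        moreover have "{u, v} \<in> E \<longleftrightarrow> {\<phi> u, \<phi> v} \<in> E" using aut_adj[OF ph] CV that by blast
        ultimately show ?thesis using that by (simp add: Ec_mem)
      qed
      then have "graph_iso C (Ec C) D (Ec D)" unfolding graph_iso_def using bij by blast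
      then have CDr: "(C, D) \<in> rel" unfolding rel_def using CQ DQ by simp
      obtain X where XR: "X \<in> R" and CX: "C = rep X" using CU U_def by blast
      obtain Y where YR: "Y \<in> R" and DY: "D = rep Y" using DU U_def by blast
      have "X = rel `` {C}" using cls XR repX[OF XR] CX by simp
      moreover have "Y = rel `` {D}" using cls YR repX[OF YR] DY by simp
      moreover have "rel `` {C} = rel `` {D}" using CDr eqv equiv_class_eq_iff by metis
      ultimately have "C = D" using CX DY by simp
      then show False using ne D_def by simp
    qed
    have fixall: "\<phi> ` C = C" if "C \<in> components V E" for C
      using that compsPQ Mk_def fixP fixMk fixU by blast
    have pt: "\<phi> x = x" if CC: "C \<in> components V E" and xC: "x \<in> C" for C x
    proof -
      define \<psi> where "\<psi> = (\<lambda>x. if x \<in> C then \<phi> x else x)"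
      have ps: "is_aut C (Ec C) \<psi>" unfolding \<psi>_def by (rule restrict_aut[OF ph CC fixall[OF CC]])
      have "\<psi> = id"
      proof (cases "C \<in> P")
        case True
        have "fixes_edge \<psi> e" if "e \<in> TC C" for e
        proof -
          have "e \<subseteq> C" using TCsub[OF True] that by (auto simp: induced_edges_def)
          then have "\<psi> ` e = \<phi> ` e" unfolding \<psi>_def by (intro image_cong) auto
          moreover have "e \<in> T" using that True T_def by blast
          ultimately show ?thesis using fx by (simp add: fixes_edge_def)
        qed
        then show ?thesis using TC[OF CC] ps by (simp add: edge_determining_def)
      next
        case False
        then have "det_index C (Ec C) = 0" using CC P_def by simp
        then show ?thesis using rigid[OF CC _ ps] by simp
      qed
      then show ?thesis using xC \<psi>_def by (metis id_apply)
    qed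
    show "\<phi> = id"
    proof
      fix x show "\<phi> x = id x"
      proof (cases "x \<in> V")
        case True then show ?thesis using pt[OF comp_of[OF True] comp_self] by simp
      next
        case False then show ?thesis using aut_out[OF ph] by simp
      qed
    qed
  qed
  have UB: "det_index V E \<le> card T" using Gdet_le[OF Tdet] .
  have "int (card M) \<ge> int (card Q) - int (card R)" using cM cQM cQM2 by linarith
  moreover have "int (card Mk) = int (card Q) - int (card R)" using cMk cU cUQ by linarith
  moreover have "(\<Sum>C\<in>P. int (det_index C (Ec C))) = int (\<Sum>C\<in>P. dd C)" unfolding dd_def by simp
  ultimately show ?thesis using LB UB cT by linarith
qed

end

theorem lemma1:
  fixes V :: "'a set" and E :: "'a set set"
  assumes "simple_graph V E"
    and "card {C \<in> components V E. is_complete_graph 1 C (induced_edges E C)} \<le> 1"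
    and "\<forall>C \<in> components V E. \<not> is_complete_graph 2 C (induced_edges E C)"
  defines "P \<equiv> {C \<in> components V E. det_index C (induced_edges E C) > 0}"
    and "Q \<equiv> {C \<in> components V E. det_index C (induced_edges E C) = 0}"
  defines "R \<equiv> Q // {(C, D). C \<in> Q \<and> D \<in> Q \<and>
                 graph_iso C (induced_edges E C) D (induced_edges E D)}"
  shows "int (det_index V E) =
           int (card Q) - int (card R) + (\<Sum>C\<in>P. int (det_index C (induced_edges E C)))"
proof -
  have "sg2 V E" using assms(1-3) by (simp add: sg2_def sg_def sg2_axioms_def)
  then interpret sg2 V E .
  show ?thesis unfolding R_def Q_def P_def by (rule main)
qed

end
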